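(* Let $b\ge2$ be an integer and let $w=d_1\dots d_p$ be a fixed block of $b$-ary digits with $p\ge1$. Let $u=d_1\dots d_{p-1}$ and $v=d_2\dots d_p$. For every $k\ge1$, the following identity of formal Laurent series in $t$ holds: $$Z_w(k)=t^{2-p}\bigl(t^{2-p}Z_w(v,0,u)\bigr)^{k-1}Z_w(v,0)^2.$$
   Context: Strings are finite sequences over $\{0,\dots,b-1\}$, including the empty string $\epsilon$. $k_w(X)$ is the number of possibly overlapping occurrences of $w$ in $X$. $Z_w(k)=\sum_l N_w(k,l)t^l$, where $N_w(k,l)$ is the number of strings of length $l$ with $k_w(X)=k$. For strings $x,y$, $Z_w(x,0,y)=\sum_lc_lt^l$, where $c_l$ is the number of strings of length $l$ with $k_w=0$, prefix $x$ and suffix $y$. Also $Z_w(x,0)=Z_w(x,0,\epsilon)$. When $p=1$, $u=v=\epsilon$. *)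

theory Defs
  imports "HOL-Computational_Algebra.Formal_Laurent_Series" "HOL-Library.Sublist"
begin

definition strings :: "nat \<Rightarrow> nat \<Rightarrow> nat list set" where
  "strings b l = {X. length X = l \<and> set X \<subseteq> {..<b}}"

definition occ :: "nat list \<Rightarrow> nat list \<Rightarrow> nat" where
  "occ w X = card {i. i + length w \<le> length X \<and> take (length w) (drop i X) = w}"

definition Zk :: "nat \<Rightarrow> nat list \<Rightarrow> nat \<Rightarrow> int fps" where
  "Zk b w k = Abs_fps (\<lambda>l. int (card {X \<in> strings b l. occ w X = k}))"

definition Z0 :: "nat \<Rightarrow> nat list \<Rightarrow> nat list \<Rightarrow> nat list \<Rightarrow> int fps" where
  "Z0 b w x y = Abs_fps (\<lambda>l. int (card {X \<in> strings b l. occ w X = 0 \<and> prefix x X \<and> suffix y X}))"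

end

theory Submission
  imports Defs
begin

lemma A1:
  fixes x :: "'a::comm_ring_1"
  assumes "E2 = E1 * Mp" "x^q * Mp = Mz * x" "x^(q*m)*E1 = x^(Suc m) * Mz^m * Bz"
  shows "x^(q*Suc m) * E2 = x^(Suc(Suc m)) * Mz^(Suc m) * Bz"
proof -
  have "x^(q*Suc m) * E2 = (x^(q*m)*E1) * (x^q * Mp)"
    by (simp add: assms(1) power_add mult_ac)
  also have "\<dots> = (x^(Suc m) * Mz^m * Bz) * (Mz * x)" by (simp only: assms(2,3))
  also have "\<dots> = x^(Suc(Suc m)) * Mz^(Suc m) * Bz" by (simp add: mult_ac)
  finally show ?thesis .
qed
lemma A2:
  fixes x :: "'a::comm_ring_1"
  assumes "Z = E1 * Bp" "Bz = x^q * Bp" "x^(q*m)*E1 = x^(Suc m) * Mz^m * Bz"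
  shows "x^(q*Suc m) * Z = x^(Suc m) * Mz^m * Bz^2"
proof -
  have "x^(q*Suc m) * Z = (x^(q*m)*E1) * (x^q * Bp)"
    by (simp add: assms(1) power_add mult_ac)
  also have "\<dots> = (x^(Suc m) * Mz^m * Bz) * Bz" by (simp only: assms(2,3))
  also have "\<dots> = x^(Suc m) * Mz^m * Bz^2" by (simp add: mult_ac power2_eq_square)
  finally show ?thesis .
qed


definition occs :: "nat list \<Rightarrow> nat list \<Rightarrow> nat set" where
  "occs w X = {i. i + length w \<le> length X \<and> take (length w) (drop i X) = w}"

lemma occs_finite[simp]: "finite (occs w X)"
  by (rule finite_subset[of _ "{..length X}"]) (auto simp: occs_def)

lemma occ_occs: "occ w X = card (occs w X)"
  by (simp add: occ_def occs_def)

lemma occs_take: "i \<in> occs w (take m X) \<longleftrightarrow> i \<in> occs w X \<and> i + length w \<le> m"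
  by (auto simp: occs_def take_drop min_def)

lemma occs_le: "i \<in> occs w X \<Longrightarrow> i + length w \<le> length X"
  by (auto simp: occs_def)

lemma occs_drop: "w \<noteq> [] \<Longrightarrow> i \<in> occs w (drop m X) \<longleftrightarrow> i + m \<in> occs w X"
  apply (auto simp: occs_def add.commute)
  using take_all by fastforce

lemma occs_end: "length w \<le> length X \<Longrightarrow> length X - length w \<in> occs w X \<longleftrightarrow> suffix w X"
  apply (auto simp: occs_def suffix_def)
  by (metis append_take_drop_id length_drop)

lemma occs_start: "0 \<in> occs w X \<longleftrightarrow> prefix w X"
  apply (auto simp: occs_def prefix_def)
  by (metis append_take_drop_id) 

lemma occs_Nil: "w \<noteq> [] \<Longrightarrow> occs w [] = {}"
  by (auto simp: occs_def)

lemma glue_parts: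
  assumes "suffix w P" "w \<noteq> []"
  shows "take (length P - length w + length w) (P @ Y) = P"
    and "drop (length P - length w + 1) (P @ Y) = tl w @ Y"
proof -
  obtain A where A: "P = A @ w" using assms(1) by (auto simp: suffix_def)
  show "take (length P - length w + length w) (P @ Y) = P" using A by simp
  show "drop (length P - length w + 1) (P @ Y) = tl w @ Y" using A assms(2)
    by (cases w) auto
qed

lemma glue_occs:
  assumes "suffix w P" "w \<noteq> []"
  shows "i \<in> occs w (P @ Y) \<longleftrightarrow> i \<in> occs w P \<or>
     (length P - length w + 1 \<le> i \<and> i - (length P - length w + 1) \<in> occs w (tl w @ Y))"
proof -
  let ?j = "length P - length w"
  have lw: "length w \<le> length P" using assms(1) by (simp add: suffix_length_le)
  have t: "i \<in> occs w P \<longleftrightarrow> i \<in> occs w (P @ Y) \<and> i + length w \<le> ?j + length w"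
    using occs_take[of i w "?j + length w" "P @ Y"] glue_parts[OF assms] lw by simp
  have d: "\<And>i'. i' \<in> occs w (tl w @ Y) \<longleftrightarrow> i' + (?j+1) \<in> occs w (P @ Y)"
    using occs_drop[OF assms(2), of _ "?j+1" "P @ Y"] glue_parts[OF assms] by simp
  show ?thesis
  proof (cases "i \<le> ?j")
    case True thus ?thesis using t by auto
  next
    case False
    then have "i - (?j+1) + (?j+1) = i" by simp
    thus ?thesis using d[of "i - (?j+1)"] t False by auto
  qed
qed

lemma shift_mem: "x \<in> (\<lambda>i. i + c) ` S \<longleftrightarrow> c \<le> x \<and> x - c \<in> S" for c :: nat
proof
  assume "c \<le> x \<and> x - c \<in> S"
  thus "x \<in> (\<lambda>i. i + c) ` S" by (intro image_eqI[of _ _ "x - c"]) auto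
qed auto

lemma glue_occs_set:
  assumes "suffix w P" "w \<noteq> []"
  shows "occs w (P @ Y) = occs w P \<union> (\<lambda>i. i + (length P - length w + 1)) ` occs w (tl w @ Y)"
  using glue_occs[OF assms] shift_mem by blast

lemma glue_occ:
  assumes "suffix w P" "w \<noteq> []"
  shows "occ w (P @ Y) = occ w P + occ w (tl w @ Y)"
proof -
  have disj: "occs w P \<inter> (\<lambda>i. i + (length P - length w + 1)) ` occs w (tl w @ Y) = {}"
    using occs_le[of _ w P] suffix_length_le[OF assms(1)] by fastforce
  have "card ((\<lambda>i. i + (length P - length w + 1)) ` occs w (tl w @ Y)) = card (occs w (tl w @ Y))"
    by (rule card_image) (auto simp: inj_on_def)
  thus ?thesis unfolding occ_occs glue_occs_set[OF assms]
    by (subst card_Un_disjoint) (use disj in auto)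
qed

lemma unique_aux:
  assumes "suffix w P1" "suffix w P2" "occ w P1 = occ w P2" "P1 @ Y1 = P2 @ Y2"
    "length P1 \<le> length P2" "w \<noteq> []"
  shows "P1 = P2"
proof (rule ccontr)
  assume ne: "P1 \<noteq> P2"
  have P1: "P1 = take (length P1) P2"
    by (metis append_eq_append_conv_if assms(4,5))
  hence lt: "length P1 < length P2" using ne assms(5) by (metis le_neq_implies_less take_all)
  have sub: "occs w P1 \<subseteq> occs w P2"
    using occs_take[of _ w "length P1" P2] P1 by auto
  have sw: "length w \<le> length P2" using assms(2) by (simp add: suffix_length_le)
  have "length P2 - length w \<in> occs w P2" using occs_end[OF sw] assms(2) by simp
  moreover have "length P2 - length w \<notin> occs w P1" using occs_le[of _ w P1] lt sw by fastforce
  ultimately have "occs w P1 \<subset> occs w P2" using sub by blast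
  hence "card (occs w P1) < card (occs w P2)" by (simp add: psubset_card_mono)
  thus False using assms(3) by (simp add: occ_occs)
qed

lemma unique:
  assumes "suffix w P1" "suffix w P2" "occ w P1 = occ w P2" "P1 @ Y1 = P2 @ Y2" "w \<noteq> []"
  shows "P1 = P2"
  using unique_aux[OF assms(1-4) _ assms(5)] unique_aux[OF assms(2,1) assms(3)[symmetric] assms(4)[symmetric] _ assms(5)]
  by (cases "length P1 \<le> length P2") auto




definition gf :: "nat list set \<Rightarrow> int fps" where
  "gf S = Abs_fps (\<lambda>n. int (card {X\<in>S. length X = n}))"

definition cat :: "nat list set \<Rightarrow> nat list set \<Rightarrow> nat list set" where
  "cat S T = (\<lambda>(P,Y). P @ Y) ` (S \<times> T)"

lemma fin_len: "finite A \<Longrightarrow> S \<subseteq> lists A \<Longrightarrow> finite {X\<in>S. length X = n}"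
  by (rule finite_subset[OF _ finite_lists_length_eq[of A n]]) auto

lemma gf_nth: "gf S $ n = int (card {X\<in>S. length X = n})"
  by (simp add: gf_def)

lemma gf_mult:
  assumes A: "finite A" and S: "S \<subseteq> lists A" and T: "T \<subseteq> lists A"
    and inj: "\<And>P1 P2 Y1 Y2. P1 \<in> S \<Longrightarrow> P2 \<in> S \<Longrightarrow> Y1 \<in> T \<Longrightarrow> Y2 \<in> T \<Longrightarrow> P1 @ Y1 = P2 @ Y2 \<Longrightarrow> P1 = P2"
  shows "gf (cat S T) = gf S * gf T"
proof (rule fps_ext)
  fix n
  let ?U = "\<Union>i\<in>{0..n}. {X\<in>S. length X = i} \<times> {Y\<in>T. length Y = n - i}"
  have fin: "\<And>i. finite ({X\<in>S. length X = i} \<times> {Y\<in>T. length Y = n - i})"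
    using fin_len[OF A S] fin_len[OF A T] by blast
  have "(gf S * gf T) $ n = (\<Sum>i=0..n. int (card {X\<in>S. length X = i}) * int (card {Y\<in>T. length Y = n - i}))"
    by (simp add: fps_mult_nth gf_nth)
  also have "\<dots> = int (\<Sum>i=0..n. card ({X\<in>S. length X = i} \<times> {Y\<in>T. length Y = n - i}))"
    by (simp add: card_cartesian_product)
  also have "(\<Sum>i=0..n. card ({X\<in>S. length X = i} \<times> {Y\<in>T. length Y = n - i})) = card ?U"
    by (rule card_UN_disjoint[symmetric]) (use fin in auto)
  also have "card ?U = card ((\<lambda>(P,Y). P @ Y) ` ?U)"
  proof (rule card_image[symmetric], rule inj_onI, clarify)
    fix P Y P' Y' assume h: "P \<in> S" "Y \<in> T" "P' \<in> S" "Y' \<in> T" "P @ Y = P' @ Y'"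
    then have "P = P'" using inj by blast
    thus "P = P' \<and> Y = Y'" using h(5) by simp
  qed
  also have "(\<lambda>(P,Y). P @ Y) ` ?U = {X\<in>cat S T. length X = n}"
    unfolding cat_def by (auto simp: image_iff)
  finally show "gf (cat S T) $ n = (gf S * gf T) $ n" by (simp add: gf_nth)
qed

lemma gf_union:
  assumes A: "finite A" and S: "S \<subseteq> lists A" and T: "T \<subseteq> lists A" and d: "S \<inter> T = {}"
  shows "gf (S \<union> T) = gf S + gf T"
proof (rule fps_ext)
  fix n
  have "{X\<in>S \<union> T. length X = n} = {X\<in>S. length X = n} \<union> {X\<in>T. length X = n}" by auto
  hence "card {X\<in>S \<union> T. length X = n} = card {X\<in>S. length X = n} + card {X\<in>T. length X = n}"
    using card_Un_disjoint[OF fin_len[OF A S] fin_len[OF A T]] d by auto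
  thus "gf (S \<union> T) $ n = (gf S + gf T) $ n" by (simp add: gf_nth)
qed

lemma gf_single: "gf {xs} = fps_X ^ length xs"
proof (rule fps_ext)
  fix n
  have "{X\<in>{xs}. length X = n} = (if n = length xs then {xs} else {})" by auto
  thus "gf {xs} $ n = (fps_X ^ length xs :: int fps) $ n" by (simp add: gf_nth)
qed




lemma occs_snoc:
  assumes "w \<noteq> []"
  shows "i \<in> occs w (Z @ [c]) \<longleftrightarrow> i \<in> occs w Z \<or> (i + length w = length Z + 1 \<and> suffix w (Z @ [c]))"
proof -
  have t: "i \<in> occs w Z \<longleftrightarrow> i \<in> occs w (Z @ [c]) \<and> i + length w \<le> length Z"
    using occs_take[of i w "length Z" "Z @ [c]"] by simp
  show ?thesis
  proof
    assume h: "i \<in> occs w (Z @ [c])"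
    show "i \<in> occs w Z \<or> (i + length w = length Z + 1 \<and> suffix w (Z @ [c]))"
    proof (cases "i + length w \<le> length Z")
      case True thus ?thesis using t h by blast
    next
      case False
      with occs_le[OF h] have e: "i + length w = length Z + 1" by simp
      hence "i = length (Z @ [c]) - length w" "length w \<le> length (Z @ [c])" by auto
      thus ?thesis using occs_end[of w "Z @ [c]"] h e by auto
    qed
  next
    assume "i \<in> occs w Z \<or> (i + length w = length Z + 1 \<and> suffix w (Z @ [c]))"
    thus "i \<in> occs w (Z @ [c])"
    proof
      assume "i \<in> occs w Z" thus ?thesis using t by blast
    next
      assume e: "i + length w = length Z + 1 \<and> suffix w (Z @ [c])"
      hence "i = length (Z @ [c]) - length w" "length w \<le> length (Z @ [c])" by auto
      thus ?thesis using occs_end[of w "Z @ [c]"] e by auto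
    qed
  qed
qed

lemma occs_cons:
  assumes "w \<noteq> []"
  shows "i \<in> occs w (c # Z) \<longleftrightarrow> (i = 0 \<and> prefix w (c # Z)) \<or> (1 \<le> i \<and> i - 1 \<in> occs w Z)"
proof -
  have d: "\<And>j. j \<in> occs w Z \<longleftrightarrow> j + 1 \<in> occs w (c # Z)"
    using occs_drop[OF assms, of _ 1 "c # Z"] by simp
  show ?thesis
  proof (cases i)
    case 0 thus ?thesis using occs_start[of w "c # Z"] by simp
  next
    case (Suc j) thus ?thesis using d[of j] by simp
  qed
qed

definition "En b w k = {P \<in> lists {..<b}. occ w P = k \<and> suffix w P}"
definition "Bp b w = {Y \<in> lists {..<b}. occ w (tl w @ Y) = 0}"
definition "Mp b w = {Y \<in> lists {..<b}. occ w (tl w @ Y) = 1 \<and> suffix w (tl w @ Y)}"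
definition "M1 b w = {Y \<in> lists {..<b}. occ w Y = 1 \<and> prefix (tl w) Y \<and> suffix w Y}"
definition "Zs b w k = {X \<in> lists {..<b}. occ w X = k}"
definition "Zs0 b w x y = {X \<in> lists {..<b}. occ w X = 0 \<and> prefix x X \<and> suffix y X}"
definition "St1 b w = {X \<in> lists {..<b}. occ w X = 1 \<and> prefix w X}"
definition "Cs b = {[c] | c. c < b}"

lemma Zk_gf: "Zk b w k = gf (Zs b w k)"
  unfolding Zk_def gf_def Zs_def strings_def
  by (rule arg_cong[where f=Abs_fps], rule ext, rule arg_cong[where f="\<lambda>A. int (card A)"]) auto

lemma Z0_gf: "Z0 b w x y = gf (Zs0 b w x y)"
  unfolding Z0_def gf_def Zs0_def strings_def
  by (rule arg_cong[where f=Abs_fps], rule ext, rule arg_cong[where f="\<lambda>A. int (card A)"]) auto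

lemma occs_empty: "occ w X = 0 \<longleftrightarrow> occs w X = {}"
  by (simp add: occ_occs)

lemma occs_one: "occ w X = 1 \<longleftrightarrow> (\<exists>i. occs w X = {i})"
  by (simp add: occ_occs card_1_singleton_iff)




context
  fixes b :: nat and w :: "nat list"
  assumes wne: "w \<noteq> []" and wb: "set w \<subseteq> {..<b}"
begin

lemma split_at_occ:
  assumes j: "j \<in> occs w X"
  shows "suffix w (take (j + length w) X)" "X = take (j + length w) X @ drop (j + length w) X"
    "length (take (j + length w) X) = j + length w"
proof -
  have "take (j + length w) X = take j X @ take (length w) (drop j X)" by (simp add: take_add)
  also have "take (length w) (drop j X) = w" using j by (simp add: occs_def)
  finally show "suffix w (take (j + length w) X)" by (simp add: suffix_def)
  show "X = take (j + length w) X @ drop (j + length w) X" by simp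
  show "length (take (j + length w) X) = j + length w" using occs_le[OF j] by simp
qed

lemma E1:
  assumes k: "k \<ge> 1"
  shows "cat (En b w k) (Bp b w) = Zs b w k"
proof
  show "cat (En b w k) (Bp b w) \<subseteq> Zs b w k"
    unfolding cat_def En_def Bp_def Zs_def using glue_occ[OF _ wne] by auto
next
  show "Zs b w k \<subseteq> cat (En b w k) (Bp b w)"
  proof
    fix X assume X: "X \<in> Zs b w k"
    have "occs w X \<noteq> {}" using X k by (auto simp: Zs_def occ_occs)
    define j where "j = Max (occs w X)"
    have j: "j \<in> occs w X" using \<open>occs w X \<noteq> {}\<close> j_def by simp
    define P where "P = take (j + length w) X"
    define Y where "Y = drop (j + length w) X"
    have sP: "suffix w P" and XPY: "X = P @ Y" and lP: "length P = j + length w"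
      using split_at_occ[OF j] unfolding P_def Y_def by auto
    have none: "occs w (tl w @ Y) = {}"
    proof (rule ccontr)
      assume "occs w (tl w @ Y) \<noteq> {}"
      then obtain i where i: "i \<in> occs w (tl w @ Y)" by blast
      have "i + (length P - length w + 1) \<in> occs w X"
        using glue_occs_set[OF sP wne, of Y] i XPY by auto
      hence "i + (length P - length w + 1) \<le> j" unfolding j_def by simp
      thus False using lP by simp
    qed
    have "occ w X = occ w P + occ w (tl w @ Y)" using glue_occ[OF sP wne] XPY by simp
    hence "occ w P = k" using none X by (simp add: occ_occs Zs_def)
    moreover have "set P \<subseteq> set X" "set Y \<subseteq> set X" unfolding P_def Y_def
      by (auto dest: in_set_takeD in_set_dropD)
    ultimately have "P \<in> En b w k" "Y \<in> Bp b w" using X sP none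
      by (auto simp: En_def Bp_def Zs_def occ_occs)
    thus "X \<in> cat (En b w k) (Bp b w)" unfolding cat_def using XPY by auto
  qed
qed

lemma E2:
  assumes k: "k \<ge> 1"
  shows "cat (En b w k) (Mp b w) = En b w (k + 1)"
proof
  show "cat (En b w k) (Mp b w) \<subseteq> En b w (k + 1)"
  proof
    fix X assume "X \<in> cat (En b w k) (Mp b w)"
    then obtain P Y where P: "P \<in> En b w k" and Y: "Y \<in> Mp b w" and X: "X = P @ Y"
      unfolding cat_def by auto
    have sP: "suffix w P" using P by (simp add: En_def)
    have "occ w X = k + 1" using glue_occ[OF sP wne, of Y] P Y X by (simp add: En_def Mp_def)
    moreover have "suffix w X"
    proof -
      obtain A where A: "P = A @ w" using sP by (auto simp: suffix_def)
      have "w = hd w # tl w" using wne by simp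
      hence "X = (A @ [hd w]) @ (tl w @ Y)" using A X by (metis append_Cons append_assoc self_append_conv2)
      moreover have "suffix w (tl w @ Y)" using Y by (simp add: Mp_def)
      ultimately show ?thesis by (metis suffix_appendI)
    qed
    ultimately show "X \<in> En b w (k + 1)" using P Y X by (auto simp: En_def Mp_def)
  qed
next
  show "En b w (k + 1) \<subseteq> cat (En b w k) (Mp b w)"
  proof
    fix X assume X: "X \<in> En b w (k + 1)"
    let ?L = "length X - length w"
    have sX: "suffix w X" using X by (simp add: En_def)
    have lw: "length w \<le> length X" using sX by (simp add: suffix_length_le)
    have L: "?L \<in> occs w X" using occs_end[OF lw] sX by simp
    have cX: "card (occs w X) = k + 1" using X by (simp add: En_def occ_occs)
    have ne: "occs w X - {?L} \<noteq> {}"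
    proof
      assume "occs w X - {?L} = {}"
      hence "occs w X \<subseteq> {?L}" by blast
      hence "card (occs w X) \<le> card {?L}" by (intro card_mono) auto
      hence "card (occs w X) \<le> 1" by simp
      thus False using cX k by simp
    qed
    define j where "j = Max (occs w X - {?L})"
    have jm: "j \<in> occs w X - {?L}" unfolding j_def by (rule Max_in) (use ne in auto)
    hence j: "j \<in> occs w X" by simp
    have jmax: "\<And>i. i \<in> occs w X \<Longrightarrow> i \<noteq> ?L \<Longrightarrow> i \<le> j" unfolding j_def by simp
    have jL: "j < ?L" using jm occs_le[OF j] by auto
    define P where "P = take (j + length w) X"
    define Y where "Y = drop (j + length w) X"
    have sP: "suffix w P" and XPY: "X = P @ Y" and lP: "length P = j + length w"
      using split_at_occ[OF j] unfolding P_def Y_def by auto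
    have oP: "occs w P = occs w X - {?L}"
    proof -
      have "\<And>i. i \<in> occs w P \<longleftrightarrow> i \<in> occs w X \<and> i \<le> j"
        unfolding P_def using occs_take[of _ w "j + length w" X] by simp
      thus ?thesis using jmax jL by fastforce
    qed
    have oY: "occs w (tl w @ Y) = {?L - (j + 1)}"
    proof -
      have g: "\<And>i. i \<in> occs w X \<longleftrightarrow> i \<in> occs w P \<or> (j + 1 \<le> i \<and> i - (j + 1) \<in> occs w (tl w @ Y))"
        using glue_occs[OF sP wne, of _ Y] XPY lP by simp
      show ?thesis
      proof (intro set_eqI iffI)
        fix i assume i: "i \<in> occs w (tl w @ Y)"
        have "i + (j+1) \<in> occs w X" using g[of "i + (j+1)"] i by simp
        moreover have "i + (j + 1) \<notin> occs w P" using occs_le[of "i + (j+1)" w P] lP by auto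
        ultimately have "i + (j+1) = ?L" using oP by auto
        thus "i \<in> {?L - (j + 1)}" by simp
      next
        fix i assume "i \<in> {?L - (j + 1)}"
        hence i: "i = ?L - (j + 1)" by simp
        have "?L \<notin> occs w P" using oP by simp
        thus "i \<in> occs w (tl w @ Y)" using g[of ?L] L i by auto
      qed
    qed
    have "card (occs w P) = k" using oP cX L by simp
    hence oPk: "occ w P = k" by (simp add: occ_occs)
    have oY1: "occ w (tl w @ Y) = 1" using oY by (simp add: occ_occs)
    have vY: "tl w @ Y = drop (j + 1) X"
      using glue_parts(2)[OF sP wne, of Y] XPY lP by simp
    have sY: "suffix w (tl w @ Y)"
    proof -
      have ll: "length w \<le> length (tl w @ Y)" using vY jL by simp
      have "length (tl w @ Y) - length w = ?L - (j + 1)" using vY by simp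
      thus ?thesis using occs_end[OF ll] oY by simp
    qed
    have "set P \<subseteq> set X" "set Y \<subseteq> set X" unfolding P_def Y_def
      by (auto dest: in_set_takeD in_set_dropD)
    hence "P \<in> En b w k" "Y \<in> Mp b w" using X sP oPk oY1 sY
      by (auto simp: En_def Mp_def)
    thus "X \<in> cat (En b w k) (Mp b w)" unfolding cat_def using XPY by auto
  qed
qed

end



context
  fixes b :: nat and w :: "nat list"
  assumes wne: "w \<noteq> []" and wb: "set w \<subseteq> {..<b}"
begin

lemma vb: "set (tl w) \<subseteq> {..<b}" using wb by (cases w) auto
lemma hdb: "hd w < b" using wb wne by (cases w) auto
lemma lastb: "last w < b" using wb wne last_in_set by blast
lemma w_split: "w = hd w # tl w" using wne by simp
lemma w_split2: "w = butlast w @ [last w]" using wne by simp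

lemma En1_occs: "X \<in> En b w 1 \<Longrightarrow> occs w X = {length X - length w}"
proof -
  assume X: "X \<in> En b w 1"
  have s: "suffix w X" using X by (simp add: En_def)
  have "length X - length w \<in> occs w X" using occs_end[of w X] s suffix_length_le[OF s] by simp
  moreover have "occ w X = 1" using X by (simp add: En_def)
  then obtain i where "occs w X = {i}" using occs_one[of w X] by blast
  ultimately show ?thesis by simp
qed

lemma St1_occs: "X \<in> St1 b w \<Longrightarrow> occs w X = {0}"
proof -
  assume X: "X \<in> St1 b w"
  have "0 \<in> occs w X" using X occs_start by (simp add: St1_def)
  moreover have "occ w X = 1" using X by (simp add: St1_def)
  then obtain i where "occs w X = {i}" using occs_one[of w X] by blast
  ultimately show ?thesis by simp
qed

lemma E3: "cat {tl w} (Bp b w) = Zs0 b w (tl w) []"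
  unfolding cat_def Bp_def Zs0_def prefix_def using vb by auto

lemma E4a: "cat {tl w} (Mp b w) = M1 b w"
  unfolding cat_def Mp_def M1_def prefix_def using vb by auto

lemma E4b: "cat (Zs0 b w (tl w) (butlast w)) {[last w]} = M1 b w"
proof (intro set_eqI iffI)
  fix X assume "X \<in> cat (Zs0 b w (tl w) (butlast w)) {[last w]}"
  then obtain Z where Z: "Z \<in> Zs0 b w (tl w) (butlast w)" and X: "X = Z @ [last w]"
    unfolding cat_def by auto
  have oZ: "occs w Z = {}" and pZ: "prefix (tl w) Z" and sZ: "suffix (butlast w) Z"
    and lZ: "Z \<in> lists {..<b}" using Z by (auto simp: Zs0_def occs_empty)
  have sX: "suffix w X" using sZ X w_split2 by (metis same_suffix_suffix)
  have lw: "length w \<le> length Z + 1" using suffix_length_le[OF sX] X by simp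
  have "occs w X = {length Z + 1 - length w}"
    using occs_snoc[OF wne, of _ Z "last w"] oZ sX X lw by auto
  hence "occ w X = 1" by (simp add: occ_occs)
  moreover have "prefix (tl w) X" using pZ X by simp
  ultimately show "X \<in> M1 b w" using lZ lastb sX X by (simp add: M1_def)
next
  fix X assume X: "X \<in> M1 b w"
  have sX: "suffix w X" and pX: "prefix (tl w) X" and lX: "X \<in> lists {..<b}" and o1: "occ w X = 1"
    using X by (auto simp: M1_def)
  obtain A where A: "X = A @ w" using sX by (auto simp: suffix_def)
  define Z where "Z = A @ butlast w"
  have XZ: "X = Z @ [last w]" unfolding Z_def using A w_split2 by (metis append_assoc)
  have L: "length X - length w \<in> occs w X" using occs_end[of w X] sX suffix_length_le[OF sX] by simp
  obtain i where i: "occs w X = {i}" using o1 occs_one by blast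
  have oZ: "occs w Z = {}"
  proof (rule ccontr)
    assume "occs w Z \<noteq> {}"
    then obtain j where j: "j \<in> occs w Z" by blast
    hence "j \<in> occs w X" using occs_snoc[OF wne, of j Z "last w"] XZ by simp
    hence "j = length X - length w" using L i by simp
    thus False using occs_le[OF j] XZ wne by simp
  qed
  have sZ: "suffix (butlast w) Z" unfolding Z_def by (rule suffix_appendI) simp
  have "length (tl w) \<le> length Z" unfolding Z_def by simp
  hence pZ: "prefix (tl w) Z" using pX XZ by (metis prefix_length_prefix prefix_order.order_refl prefix_snoc)
  have "Z \<in> lists {..<b}" using lX XZ by simp
  hence "Z \<in> Zs0 b w (tl w) (butlast w)" using oZ sZ pZ by (simp add: Zs0_def occs_empty)
  thus "X \<in> cat (Zs0 b w (tl w) (butlast w)) {[last w]}" unfolding cat_def using XZ by auto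
qed

lemma E5: "insert [] (cat (Zs b w 0) (Cs b)) = En b w 1 \<union> Zs b w 0"
proof (intro set_eqI iffI)
  fix X assume "X \<in> insert [] (cat (Zs b w 0) (Cs b))"
  then consider "X = []" | Y c where "Y \<in> Zs b w 0" "c < b" "X = Y @ [c]"
    unfolding cat_def Cs_def by auto
  thus "X \<in> En b w 1 \<union> Zs b w 0"
  proof cases
    case 1 thus ?thesis using occs_Nil[OF wne] by (simp add: Zs_def occs_empty)
  next
    case 2
    have oY: "occs w Y = {}" using 2 by (simp add: Zs_def occs_empty)
    show ?thesis
    proof (cases "suffix w X")
      case True
      have lw: "length w \<le> length Y + 1" using suffix_length_le[OF True] 2 by simp
      have "occs w X = {length Y + 1 - length w}"
        using occs_snoc[OF wne, of _ Y c] oY True 2 lw by auto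
      thus ?thesis using 2 True by (simp add: En_def occ_occs Zs_def)
    next
      case False
      have "occs w X = {}" using occs_snoc[OF wne, of _ Y c] oY False 2 by auto
      thus ?thesis using 2 by (simp add: occs_empty Zs_def)
    qed
  qed
next
  fix X assume X: "X \<in> En b w 1 \<union> Zs b w 0"
  show "X \<in> insert [] (cat (Zs b w 0) (Cs b))"
  proof (cases "X = []")
    case False
    have XX: "X = butlast X @ [last X]" using False by simp
    have lX: "X \<in> lists {..<b}" using X by (auto simp: En_def Zs_def)
    have "occs w (butlast X) = {}"
    proof (rule ccontr)
      assume "occs w (butlast X) \<noteq> {}"
      then obtain j where j: "j \<in> occs w (butlast X)" by blast
      hence jX: "j \<in> occs w X" "j + length w \<le> length X - 1"
        using occs_take[of j w "length X - 1" X] by (auto simp: butlast_conv_take)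
      show False
      proof (cases "X \<in> Zs b w 0")
        case True thus False using jX by (simp add: Zs_def occs_empty)
      next
        case f: False
        hence "X \<in> En b w 1" using X by simp
        hence "j = length X - length w" using En1_occs jX by simp
        thus False using jX wne False by (cases w) auto
      qed
    qed
    moreover have "butlast X \<in> lists {..<b}" using lX by (auto dest: in_set_butlastD)
    ultimately have "butlast X \<in> Zs b w 0" by (simp add: Zs_def occs_empty)
    moreover have "[last X] \<in> Cs b" using lX False by (auto simp: Cs_def)
    ultimately show ?thesis unfolding cat_def using XX
      by (auto intro!: image_eqI[of _ _ "(butlast X, [last X])"])
  qed simp
qed

lemma E6: "insert [] (cat (Cs b) (Zs b w 0)) = St1 b w \<union> Zs b w 0"
proof (intro set_eqI iffI)
  fix X assume "X \<in> insert [] (cat (Cs b) (Zs b w 0))"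
  then consider "X = []" | Y c where "Y \<in> Zs b w 0" "c < b" "X = c # Y"
    unfolding cat_def Cs_def by auto
  thus "X \<in> St1 b w \<union> Zs b w 0"
  proof cases
    case 1 thus ?thesis using occs_Nil[OF wne] by (simp add: Zs_def occs_empty)
  next
    case 2
    have oY: "occs w Y = {}" using 2 by (simp add: Zs_def occs_empty)
    show ?thesis
    proof (cases "prefix w X")
      case True
      have "occs w X = {0}"
        using occs_cons[OF wne, of _ c Y] oY True 2 by auto
      thus ?thesis using 2 True by (simp add: St1_def occ_occs Zs_def)
    next
      case False
      have "occs w X = {}" using occs_cons[OF wne, of _ c Y] oY False 2 by auto
      thus ?thesis using 2 by (simp add: occs_empty Zs_def)
    qed
  qed
next
  fix X assume X: "X \<in> St1 b w \<union> Zs b w 0"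
  show "X \<in> insert [] (cat (Cs b) (Zs b w 0))"
  proof (cases "X = []")
    case False
    have XX: "X = [hd X] @ tl X" using False by simp
    have lX: "X \<in> lists {..<b}" using X by (auto simp: St1_def Zs_def)
    have "occs w (tl X) = {}"
    proof (rule ccontr)
      assume "occs w (tl X) \<noteq> {}"
      then obtain j where j: "j \<in> occs w (tl X)" by blast
      hence jX: "j + 1 \<in> occs w X"
        using occs_drop[OF wne, of j 1 X] by (simp add: drop_Suc)
      show False
      proof (cases "X \<in> Zs b w 0")
        case True thus False using jX by (simp add: Zs_def occs_empty)
      next
        case f: False
        hence "X \<in> St1 b w" using X by simp
        thus False using St1_occs jX by simp
      qed
    qed
    moreover have "tl X \<in> lists {..<b}" using lX by (cases X) auto
    ultimately have "tl X \<in> Zs b w 0" by (simp add: Zs_def occs_empty)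
    moreover have "[hd X] \<in> Cs b" using lX False by (auto simp: Cs_def)
    ultimately show ?thesis unfolding cat_def using XX
      by (auto intro!: image_eqI[of _ _ "([hd X], tl X)"])
  qed simp
qed

lemma E7: "St1 b w = cat {[hd w]} (Zs0 b w (tl w) [])"
proof (intro set_eqI iffI)
  fix X assume X: "X \<in> St1 b w"
  have pX: "prefix w X" and lX: "X \<in> lists {..<b}" using X by (auto simp: St1_def)
  obtain R where R: "X = w @ R" using pX by (auto simp: prefix_def)
  define Z where "Z = tl w @ R"
  have XZ: "X = [hd w] @ Z" unfolding Z_def using R w_split by (metis append_Cons append_Nil)
  have "occs w Z = {}"
  proof (rule ccontr)
    assume "occs w Z \<noteq> {}"
    then obtain j where j: "j \<in> occs w Z" by blast
    hence "Suc j \<in> occs w X" using occs_cons[OF wne, of "Suc j" "hd w" Z] XZ by simp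
    thus False using St1_occs[OF X] by simp
  qed
  moreover have "prefix (tl w) Z" unfolding Z_def by simp
  moreover have "Z \<in> lists {..<b}" using lX XZ by simp
  ultimately have "Z \<in> Zs0 b w (tl w) []" by (simp add: Zs0_def occs_empty)
  thus "X \<in> cat {[hd w]} (Zs0 b w (tl w) [])" unfolding cat_def using XZ
    by (auto intro!: image_eqI[of _ _ "([hd w], Z)"])
next
  fix X assume "X \<in> cat {[hd w]} (Zs0 b w (tl w) [])"
  then obtain Z where Z: "Z \<in> Zs0 b w (tl w) []" and X: "X = hd w # Z"
    unfolding cat_def by auto
  have oZ: "occs w Z = {}" and pZ: "prefix (tl w) Z" and lZ: "Z \<in> lists {..<b}"
    using Z by (auto simp: Zs0_def occs_empty)
  have pX: "prefix w X" using pZ X w_split by (metis Cons_prefix_Cons)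
  have "occs w X = {0}" using occs_cons[OF wne, of _ "hd w" Z] oZ pX X by auto
  thus "X \<in> St1 b w" using pX lZ X hdb by (simp add: St1_def occ_occs)
qed

end



lemma gf_insert_Nil:
  assumes "finite A" "S \<subseteq> lists A" "[] \<notin> S"
  shows "gf (insert [] S) = 1 + gf S"
proof -
  have "gf ({[]} \<union> S) = gf {[]} + gf S"
    by (rule gf_union[OF assms(1)]) (use assms in auto)
  thus ?thesis using gf_single[of "[]"] by simp
qed

context
  fixes b :: nat and w :: "nat list"
  assumes wne: "w \<noteq> []" and wb: "set w \<subseteq> {..<b}"
begin

lemma En_lists: "En b w k \<subseteq> lists {..<b}" by (auto simp: En_def)
lemma Bp_lists: "Bp b w \<subseteq> lists {..<b}" by (auto simp: Bp_def)
lemma Mp_lists: "Mp b w \<subseteq> lists {..<b}" by (auto simp: Mp_def)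
lemma Zs_lists: "Zs b w k \<subseteq> lists {..<b}" by (auto simp: Zs_def)
lemma Zs0_lists: "Zs0 b w x y \<subseteq> lists {..<b}" by (auto simp: Zs0_def)
lemma St1_lists: "St1 b w \<subseteq> lists {..<b}" by (auto simp: St1_def)
lemma Cs_lists: "Cs b \<subseteq> lists {..<b}" by (auto simp: Cs_def)
lemma tl_lists: "{tl w} \<subseteq> lists {..<b}" using vb[OF wne wb] by auto
lemma hd_lists: "{[hd w]} \<subseteq> lists {..<b}" using hdb[OF wne wb] by auto
lemma last_lists: "{[last w]} \<subseteq> lists {..<b}" using lastb[OF wne wb] by auto

lemma En_inj: "P1 \<in> En b w k \<Longrightarrow> P2 \<in> En b w k \<Longrightarrow> P1 @ Y1 = P2 @ Y2 \<Longrightarrow> P1 = P2"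
  using unique[OF _ _ _ _ wne, of P1 P2 Y1 Y2] by (auto simp: En_def)

lemma G1: "k \<ge> 1 \<Longrightarrow> gf (Zs b w k) = gf (En b w k) * gf (Bp b w)"
  using gf_mult[OF _ En_lists[of k] Bp_lists] En_inj E1[OF wne wb] by simp

lemma G2: "k \<ge> 1 \<Longrightarrow> gf (En b w (k + 1)) = gf (En b w k) * gf (Mp b w)"
  using gf_mult[OF _ En_lists[of k] Mp_lists] En_inj E2[OF wne wb] by simp

lemma G3: "Z0 b w (tl w) [] = fps_X ^ (length w - 1) * gf (Bp b w)"
  using gf_mult[OF _ tl_lists Bp_lists] E3[OF wne wb] gf_single[of "tl w"]
  by (simp add: Z0_gf)

lemma G4: "fps_X ^ (length w - 1) * gf (Mp b w) = Z0 b w (tl w) (butlast w) * fps_X"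
proof -
  have "gf (M1 b w) = fps_X ^ (length w - 1) * gf (Mp b w)"
    using gf_mult[OF _ tl_lists Mp_lists] E4a[OF wne wb] gf_single[of "tl w"] by simp
  moreover have "gf (M1 b w) = Z0 b w (tl w) (butlast w) * fps_X"
    using gf_mult[OF _ Zs0_lists[of "tl w" "butlast w"] last_lists] E4b[OF wne wb] gf_single[of "[last w]"]
    by (simp add: Z0_gf)
  ultimately show ?thesis by simp
qed

lemma G5: "gf (En b w 1) = fps_X * Z0 b w (tl w) []"
proof -
  let ?F = "Zs b w 0"
  have i1: "P1 = P2" if "Y1 \<in> Cs b" "Y2 \<in> Cs b" "P1 @ Y1 = P2 @ Y2" for P1 P2 Y1 Y2
    using that by (auto simp: Cs_def)
  have i2: "P1 = P2" if "P1 \<in> Cs b" "P2 \<in> Cs b" "P1 @ Y1 = P2 @ Y2" for P1 P2 Y1 Y2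
    using that by (auto simp: Cs_def)
  have c1: "cat ?F (Cs b) \<subseteq> lists {..<b}" by (auto simp: cat_def Zs_def Cs_def)
  have c2: "cat (Cs b) ?F \<subseteq> lists {..<b}" by (auto simp: cat_def Zs_def Cs_def)
  have n1: "[] \<notin> cat ?F (Cs b)" by (auto simp: cat_def Cs_def)
  have n2: "[] \<notin> cat (Cs b) ?F" by (auto simp: cat_def Cs_def)
  have d1: "En b w 1 \<inter> ?F = {}" by (auto simp: En_def Zs_def)
  have d2: "St1 b w \<inter> ?F = {}" by (auto simp: St1_def Zs_def)
  have m1: "gf (cat ?F (Cs b)) = gf ?F * gf (Cs b)"
    by (rule gf_mult[OF _ Zs_lists Cs_lists]) (auto intro: i1)
  have m2: "gf (cat (Cs b) ?F) = gf (Cs b) * gf ?F"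
    by (rule gf_mult[OF _ Cs_lists Zs_lists]) (auto intro: i2)
  have u1: "gf (En b w 1 \<union> ?F) = gf (En b w 1) + gf ?F"
    by (rule gf_union[OF _ En_lists Zs_lists d1]) simp
  have u2: "gf (St1 b w \<union> ?F) = gf (St1 b w) + gf ?F"
    by (rule gf_union[OF _ St1_lists Zs_lists d2]) simp
  have "1 + gf ?F * gf (Cs b) = gf (En b w 1) + gf ?F"
  proof -
    have "1 + gf ?F * gf (Cs b) = gf (insert [] (cat ?F (Cs b)))"
      using gf_insert_Nil[OF _ c1 n1] m1 by simp
    also have "\<dots> = gf (En b w 1 \<union> ?F)" using E5[OF wne wb] by simp
    finally show ?thesis using u1 by simp
  qed
  moreover have "1 + gf (Cs b) * gf ?F = gf (St1 b w) + gf ?F"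
  proof -
    have "1 + gf (Cs b) * gf ?F = gf (insert [] (cat (Cs b) ?F))"
      using gf_insert_Nil[OF _ c2 n2] m2 by simp
    also have "\<dots> = gf (St1 b w \<union> ?F)" using E6[OF wne wb] by simp
    finally show ?thesis using u2 by simp
  qed
  ultimately have "gf (En b w 1) = gf (St1 b w)" by (simp add: mult.commute)
  also have "\<dots> = fps_X * Z0 b w (tl w) []"
    using gf_mult[OF _ hd_lists Zs0_lists[of "tl w" "[]"]] E7[OF wne wb] gf_single[of "[hd w]"]
    by (simp add: Z0_gf)
  finally show ?thesis .
qed


lemma H: "fps_X ^ ((length w - 1) * m) * gf (En b w (Suc m)) =
    fps_X ^ Suc m * Z0 b w (tl w) (butlast w) ^ m * Z0 b w (tl w) []"
proof (induction m)
  case 0 thus ?case using G5 by simp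
next
  case (Suc m)
  show ?case by (rule A1[OF G2[of "Suc m", simplified] G4 Suc])
qed

lemma HZ: "fps_X ^ ((length w - 1) * Suc m) * Zk b w (Suc m) =
    fps_X ^ Suc m * Z0 b w (tl w) (butlast w) ^ m * Z0 b w (tl w) [] ^ 2"
  unfolding Zk_gf by (rule A2[OF G1[of "Suc m", simplified] G3 H])

end



lemma fin:
  fixes Zf Mf Bf :: "int fps" and p m :: nat
  assumes p: "p \<ge> 1" and HZ': "fps_X ^ ((p - 1) * Suc m) * Zf = fps_X ^ Suc m * Mf ^ m * Bf ^ 2"
  shows "fps_to_fls Zf = fls_X_intpow (2 - int p) *
    (fls_X_intpow (2 - int p) * fps_to_fls Mf) ^ (Suc m - 1) * (fps_to_fls Bf) ^ 2"
proof -
  let ?Z = "fps_to_fls Zf"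
  let ?M = "fps_to_fls Mf"
  let ?B = "fps_to_fls Bf"
  have 1: "fls_X_intpow (int ((p - 1) * Suc m)) * ?Z = fls_X_intpow (int (Suc m)) * ?M ^ m * ?B ^ 2"
    using arg_cong[OF HZ', of fps_to_fls]
    by (simp only: fls_times_fps_to_fls fps_to_fls_power fps_X_to_fls fls_X_power_conv_shift_1)
  define c :: int where "c = 2 - int p"
  define a :: int where "a = int ((p - 1) * Suc m)"
  have inv: "fls_X_intpow (- a) * fls_X_intpow a = (1 :: int fls)"
    unfolding fls_X_intpow_times_fls_X_intpow by simp
  have "?Z = fls_X_intpow (- a) * (fls_X_intpow a * ?Z)"
    by (simp only: mult.assoc[symmetric] inv mult_1_left)
  also have "\<dots> = (fls_X_intpow (- a) * fls_X_intpow (int (Suc m))) * ?M ^ m * ?B ^ 2"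
    using 1 unfolding a_def by (simp only: mult.assoc)
  also have "fls_X_intpow (- a) * fls_X_intpow (int (Suc m)) = (fls_X_intpow (- a + int (Suc m)) :: int fls)"
    by (rule fls_X_intpow_times_fls_X_intpow)
  also have "- a + int (Suc m) = c + int m * c"
  proof -
    obtain r where r: "p = Suc r" using p by (cases p) auto
    show ?thesis unfolding a_def c_def r by (simp add: algebra_simps)
  qed
  also have "fls_X_intpow (c + int m * c) * ?M ^ m * ?B ^ 2 =
      fls_X_intpow c * (fls_X_intpow c * ?M) ^ m * ?B ^ 2"
    by (simp only: power_mult_distrib fls_X_intpow_power mult.assoc[symmetric]
        fls_X_intpow_times_fls_X_intpow)
  finally show ?thesis unfolding c_def by simp
qed

theorem lemma7:
  fixes b k :: nat and w :: "nat list"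
  assumes "b \<ge> 2" and "w \<noteq> []" and "set w \<subseteq> {..<b}" and "k \<ge> 1"
  shows "fps_to_fls (Zk b w k) =
    fls_X_intpow (2 - int (length w)) *
    (fls_X_intpow (2 - int (length w)) * fps_to_fls (Z0 b w (tl w) (butlast w))) ^ (k - 1) *
    (fps_to_fls (Z0 b w (tl w) [])) ^ 2"
proof -
  obtain m where k: "k = Suc m" using assms(4) by (cases k) auto
  have p: "length w \<ge> 1" using assms(2) by (cases w) auto
  show ?thesis unfolding k by (rule fin[OF p HZ[OF assms(2,3)]])
qed

end
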